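(* Let $m\ge1$, $n\ge1$, fix $t_0\in\mathbb{Z}^m$ and let $\mathcal{Z}=\{t\in\mathbb{Z}^m\mid t\ge t_0\}$. Let $T=(T^1,\dots,T^m)\in\mathbb{N}^m$, $T\ne0$. Let $A_\alpha\colon\mathcal{Z}\to\mathcal{M}_n(\mathbb{C})$, $\alpha\in\{1,\dots,m\}$, satisfy $$A_\alpha(t+1_\beta)A_\beta(t)=A_\beta(t+1_\alpha)A_\alpha(t),\quad \forall t\in\mathcal{Z},\ \forall\alpha,\beta,$$ and suppose $A_\alpha(t)$ is invertible for all $\alpha$ and all $t\in\mathcal{Z}$. Let $\Phi(t)=\chi(t,t_0)$, $t\in\mathcal{Z}$. Assume there exist a function $P\colon\mathcal{Z}\to\mathcal{M}_n(\mathbb{C})$, periodic of period $T$ (i.e. $P(t+T)=P(t)$ for all $t\in\mathcal{Z}$), and a constant invertible matrix $B\in\mathcal{M}_n(\mathbb{C})$ such that $\Phi(t)=P(t)B^{|t|}$ for all $t\ge t_0$, where $|t|=t^1+\dots+t^m$. Consider the recurrences $$x(t+1_\alpha)=A_\alpha(t)x(t),\quad\forall t\ge t_0,\ \forall\alpha\in\{1,\dots,m\},\qquad (1)$$ $$y(t+1_\alpha)=B\,y(t),\quad\forall t\ge t_0,\ \forall\alpha\in\{1,\dots,m\},\qquad (2)$$ for functions $x,y\colon\mathcal{Z}\to\mathbb{C}^n$. Then (each $P(t)$ being invertible) if $y$ is a solution of (2), then $x(t):=P(t)y(t)$ is a solution of (1); and conversely, if $x$ is a solution of (1), then $y(t):=P(t)^{-1}x(t)$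 is a solution of (2).
   Context: $\mathbb{N}=\{0,1,2,\dots\}$; $1_\alpha\in\mathbb{Z}^m$ has $1$ in position $\alpha$ and $0$ elsewhere; $s\le t$ in $\mathbb{Z}^m$ means $s^\alpha\le t^\alpha$ for all $\alpha$. Under the compatibility relations, for each $s\in\mathcal{Z}$ there is a unique $\chi(\cdot,s)\colon\{t\in\mathcal{Z}\mid t\ge s\}\to\mathcal{M}_n(\mathbb{C})$ with $\chi(s,s)=I_n$ and $\chi(t+1_\alpha,s)=A_\alpha(t)\chi(t,s)$ for all $t\ge s$ and all $\alpha$ (the transition matrix). Negative integer powers of $B$ are powers of $B^{-1}$. *)

theory Defs
  imports "HOL-Analysis.Analysis"
begin

text \<open>Lattice points t in Z^m are modelled as int ^ 'm (the finite type 'm indexes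
  the directions 1..m); n x n complex matrices as complex ^ 'n ^ 'n, with matrix
  product (**) and matrix-vector product ( *v ).\<close>

definition zle :: "int ^ 'm \<Rightarrow> int ^ 'm \<Rightarrow> bool" where
  "zle s t \<longleftrightarrow> (\<forall>i. s $ i \<le> t $ i)"

definition unitv :: "'m::finite \<Rightarrow> int ^ 'm" where
  "unitv \<alpha> = (\<chi> i. if i = \<alpha> then 1 else 0)"

definition zabs :: "int ^ 'm::finite \<Rightarrow> int" where
  "zabs t = (\<Sum>i\<in>UNIV. t $ i)"

fun mpow :: "complex ^ 'n ^ 'n \<Rightarrow> nat \<Rightarrow> complex ^ 'n ^ 'n" where
  "mpow B 0 = mat 1"
| "mpow B (Suc k) = B ** mpow B k"

definition mpow_int :: "complex ^ 'n ^ 'n \<Rightarrow> int \<Rightarrow> complex ^ 'n ^ 'n" where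
  "mpow_int B k = (if 0 \<le> k then mpow B (nat k) else mpow (matrix_inv B) (nat (- k)))"

text \<open>Transition matrix chi(t,s), defined for t \<ge> s (extended by 0 elsewhere so that
  the defining description has a unique solution under the compatibility relations).\<close>
definition transition ::
  "('m::finite \<Rightarrow> int ^ 'm \<Rightarrow> complex ^ 'n ^ 'n) \<Rightarrow> int ^ 'm \<Rightarrow> int ^ 'm \<Rightarrow> complex ^ 'n ^ 'n" where
  "transition A t s = (THE f. f s = mat 1
      \<and> (\<forall>u. \<not> zle s u \<longrightarrow> f u = 0)
      \<and> (\<forall>u \<alpha>. zle s u \<longrightarrow> f (u + unitv \<alpha>) = A \<alpha> u ** f u)) t"

end

theory Submission
  imports Defs
begin

lemma minv:
  fixes M :: "'a::semiring_1^'n^'n"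
  assumes "invertible M"
  shows "M ** matrix_inv M = mat 1 \<and> matrix_inv M ** M = mat 1"
  using assms unfolding invertible_def matrix_inv_def by (rule someI_ex)

lemma minv_inv: "invertible (M::'a::semiring_1^'n^'n) \<Longrightarrow> invertible (matrix_inv M)"
  using minv unfolding invertible_def by blast

lemma unitv_nth: "unitv \<alpha> $ i = (if i = \<alpha> then 1 else 0)"
  by (simp add: unitv_def)

lemma zabs_add: "zabs (u + v) = zabs u + zabs v"
  by (simp add: zabs_def sum.distrib)

lemma zabs_diff: "zabs (u - v) = zabs u - zabs v"
  by (simp add: zabs_def sum_subtractf)

lemma zabs_unitv: "zabs (unitv \<alpha>) = 1"
  by (simp add: zabs_def unitv_nth)

lemma zabs_nonneg: "zle s u \<Longrightarrow> 0 \<le> zabs (u - s)"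
  unfolding zabs_def zle_def by (auto intro: sum_nonneg)

lemma zabs_zero: "zle s u \<Longrightarrow> zabs (u - s) = 0 \<Longrightarrow> u = s"
  unfolding zabs_def zle_def
  by (subst (asm) sum_nonneg_eq_0_iff) (auto simp: vec_eq_iff)

lemma zabs_two:
  assumes "zle s u" "\<alpha> \<noteq> \<beta>" "s$\<alpha> < u$\<alpha>" "s$\<beta> < u$\<beta>"
  shows "2 \<le> zabs (u - s)"
proof -
  have "(\<Sum>i\<in>{\<alpha>,\<beta>}. (u - s)$i) \<le> (\<Sum>i\<in>UNIV. (u - s)$i)"
    by (rule sum_mono2) (use assms(1) in \<open>auto simp: zle_def\<close>)
  moreover have "(\<Sum>i\<in>{\<alpha>,\<beta>}. (u - s)$i) \<ge> 2" using assms by simp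
  ultimately show ?thesis unfolding zabs_def by simp
qed

lemma zle_minus: "zle s u \<Longrightarrow> s$\<alpha> < u$\<alpha> \<Longrightarrow> zle s (u - unitv \<alpha>)"
  by (auto simp: zle_def unitv_nth)

lemma zle_plus: "zle s u \<Longrightarrow> zle s (u + unitv \<alpha>)"
  unfolding zle_def
proof (intro allI)
  fix i assume "\<forall>i. s $ i \<le> u $ i"
  then have "s $ i \<le> u $ i" by blast
  then show "s $ i \<le> (u + unitv \<alpha>) $ i" by (cases "i = \<alpha>") (auto simp: unitv_nth)
qed

fun FF :: "('m::finite \<Rightarrow> int^'m \<Rightarrow> 'a::semiring_1^'n^'n) \<Rightarrow> int^'m \<Rightarrow> nat \<Rightarrow> int^'m \<Rightarrow> 'a^'n^'n" where
  "FF A s 0 u = mat 1"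
| "FF A s (Suc k) u = (let \<alpha> = (SOME \<alpha>. s$\<alpha> < u$\<alpha>) in A \<alpha> (u - unitv \<alpha>) ** FF A s k (u - unitv \<alpha>))"

lemma FF_step:
  fixes A :: "'m::finite \<Rightarrow> int^'m \<Rightarrow> 'a::semiring_1^'n^'n"
  assumes compat: "\<And>w \<alpha> \<beta>. zle s w \<Longrightarrow> A \<alpha> (w + unitv \<beta>) ** A \<beta> w = A \<beta> (w + unitv \<alpha>) ** A \<alpha> w"
  shows "zle s u \<Longrightarrow> zabs (u - s) = int (Suc k) \<Longrightarrow> s$\<alpha> < u$\<alpha> \<Longrightarrow>
     FF A s (Suc k) u = A \<alpha> (u - unitv \<alpha>) ** FF A s k (u - unitv \<alpha>)"
proof (induction k arbitrary: u \<alpha>)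
  case 0
  define \<beta> where "\<beta> = (SOME \<alpha>. s$\<alpha> < u$\<alpha>)"
  have b: "s$\<beta> < u$\<beta>" unfolding \<beta>_def by (rule someI) (rule 0(3))
  have "\<beta> = \<alpha>"
  proof (rule ccontr)
    assume "\<beta> \<noteq> \<alpha>"
    from zabs_two[OF 0(1) this b 0(3)] 0(2) show False by simp
  qed
  then show ?case by (simp add: \<beta>_def[symmetric] Let_def)
next
  case (Suc k)
  define \<beta> where "\<beta> = (SOME \<alpha>. s$\<alpha> < u$\<alpha>)"
  have b: "s$\<beta> < u$\<beta>" unfolding \<beta>_def by (rule someI) (rule Suc(4))
  have eq: "FF A s (Suc (Suc k)) u = A \<beta> (u - unitv \<beta>) ** FF A s (Suc k) (u - unitv \<beta>)"
    by (simp add: \<beta>_def[symmetric] Let_def)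
  show ?case
  proof (cases "\<beta> = \<alpha>")
    case True then show ?thesis using eq by simp
  next
    case False
    define w where "w = u - unitv \<alpha> - unitv \<beta>"
    have z1: "zle s (u - unitv \<beta>)" using zle_minus[OF Suc(2) b] .
    have z2: "zle s (u - unitv \<alpha>)" using zle_minus[OF Suc(2) Suc(4)] .
    have d1: "zabs (u - unitv \<beta> - s) = int (Suc k)"
      using Suc(3) by (simp add: zabs_diff zabs_unitv)
    have d2: "zabs (u - unitv \<alpha> - s) = int (Suc k)"
      using Suc(3) by (simp add: zabs_diff zabs_unitv)
    have p1: "s$\<alpha> < (u - unitv \<beta>)$\<alpha>" using Suc(4) False by (simp add: unitv_nth)
    have p2: "s$\<beta> < (u - unitv \<alpha>)$\<beta>" using b False by (simp add: unitv_nth)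
    have w1: "u - unitv \<beta> - unitv \<alpha> = w" by (simp add: w_def algebra_simps)
    have w2: "u - unitv \<alpha> - unitv \<beta> = w" by (simp add: w_def)
    have wa: "w + unitv \<alpha> = u - unitv \<beta>" by (simp add: w_def algebra_simps)
    have wb: "w + unitv \<beta> = u - unitv \<alpha>" by (simp add: w_def algebra_simps)
    have zw: "zle s w" using zle_minus[OF z2 p2] w2 by simp
    have I1: "FF A s (Suc k) (u - unitv \<beta>) = A \<alpha> w ** FF A s k w"
      using Suc.IH[OF z1 d1 p1] w1 by simp
    have I2: "FF A s (Suc k) (u - unitv \<alpha>) = A \<beta> w ** FF A s k w"
      using Suc.IH[OF z2 d2 p2] w2 by simp
    have "FF A s (Suc (Suc k)) u = (A \<beta> (w + unitv \<alpha>) ** A \<alpha> w) ** FF A s k w"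
      using eq I1 wa by (simp add: matrix_mul_assoc)
    also have "\<dots> = (A \<alpha> (w + unitv \<beta>) ** A \<beta> w) ** FF A s k w"
      using compat[OF zw, of \<alpha> \<beta>] by simp
    also have "\<dots> = A \<alpha> (u - unitv \<alpha>) ** FF A s (Suc k) (u - unitv \<alpha>)"
      using I2 wb by (simp add: matrix_mul_assoc)
    finally show ?thesis .
  qed
qed

definition fx where
  "fx A s u = (if zle s u then FF A s (nat (zabs (u - s))) u else 0)"

lemma fx_rec:
  fixes A :: "'m::finite \<Rightarrow> int^'m \<Rightarrow> 'a::semiring_1^'n^'n"
  assumes compat: "\<And>w \<alpha> \<beta>. zle s w \<Longrightarrow> A \<alpha> (w + unitv \<beta>) ** A \<beta> w = A \<beta> (w + unitv \<alpha>) ** A \<alpha> w"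
    and u: "zle s u"
  shows "fx A s (u + unitv \<alpha>) = A \<alpha> u ** fx A s u"
proof -
  have z: "zle s (u + unitv \<alpha>)" using zle_plus[OF u] .
  have n: "0 \<le> zabs (u - s)" using zabs_nonneg[OF u] .
  have d: "zabs (u + unitv \<alpha> - s) = int (Suc (nat (zabs (u - s))))"
    using n by (simp add: zabs_diff zabs_add zabs_unitv)
  have p: "s$\<alpha> < (u + unitv \<alpha>)$\<alpha>" using u by (simp add: unitv_nth zle_def)
  have e: "nat (zabs (u + unitv \<alpha> - s)) = Suc (nat (zabs (u - s)))" using d by (metis nat_int)
  have "fx A s (u + unitv \<alpha>) = FF A s (Suc (nat (zabs (u - s)))) (u + unitv \<alpha>)"
    using z e by (simp add: fx_def del: FF.simps)
  also have "\<dots> = A \<alpha> (u + unitv \<alpha> - unitv \<alpha>) ** FF A s (nat (zabs (u - s))) (u + unitv \<alpha> - unitv \<alpha>)"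
    by (rule FF_step[OF compat z d p])
  also have "\<dots> = A \<alpha> u ** fx A s u" using u by (simp add: fx_def del: FF.simps)
  finally show ?thesis .
qed

lemma fx_s: "fx A s s = mat 1"
  by (simp add: fx_def zle_def zabs_def)

lemma exists_pos: "zle s u \<Longrightarrow> u \<noteq> s \<Longrightarrow> \<exists>\<alpha>. s$\<alpha> < u$\<alpha>"
  by (metis (mono_tags) zle_def vec_eq_iff order.not_eq_order_implies_strict)

lemma dist_induct:
  assumes base: "P s"
    and step: "\<And>u \<alpha>. zle s u \<Longrightarrow> s$\<alpha> < u$\<alpha> \<Longrightarrow> P (u - unitv \<alpha>) \<Longrightarrow> P u"
  shows "zle s u \<Longrightarrow> P u"
proof (induction "nat (zabs (u - s))" arbitrary: u)
  case 0
  then have "u = s" using zabs_zero zabs_nonneg by fastforce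
  then show ?case using base by simp
next
  case (Suc k)
  then have "u \<noteq> s" by (auto simp: zabs_def)
  then obtain \<alpha> where a: "s$\<alpha> < u$\<alpha>" using exists_pos Suc(3) by blast
  have z: "zle s (u - unitv \<alpha>)" using zle_minus[OF Suc(3) a] .
  have "k = nat (zabs (u - unitv \<alpha> - s))"
    using Suc(2) zabs_nonneg[OF Suc(3)] by (simp add: zabs_diff zabs_unitv)
  then have "P (u - unitv \<alpha>)" using Suc.hyps(1) z by blast
  then show ?case using step[OF Suc(3) a] by simp
qed

lemma transition_eq:
  fixes A :: "'m::finite \<Rightarrow> int^'m \<Rightarrow> complex^'n^'n"
  assumes compat: "\<And>w \<alpha> \<beta>. zle s w \<Longrightarrow> A \<alpha> (w + unitv \<beta>) ** A \<beta> w = A \<beta> (w + unitv \<alpha>) ** A \<alpha> w"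
  shows "transition A t s = fx A s t"
proof -
  let ?Q = "\<lambda>f. f s = mat 1
      \<and> (\<forall>u. \<not> zle s u \<longrightarrow> f u = 0)
      \<and> (\<forall>u \<alpha>. zle s u \<longrightarrow> f (u + unitv \<alpha>) = A \<alpha> u ** f u)"
  have Qf: "?Q (fx A s)" using fx_s fx_rec[OF compat] by (auto simp: fx_def zle_def)
  have "(THE f. ?Q f) = fx A s"
  proof (rule the_equality)
    show "?Q (fx A s)" by (rule Qf)
  next
    fix g assume g: "?Q g"
    show "g = fx A s"
    proof
      fix u
      show "g u = fx A s u"
      proof (cases "zle s u")
        case False then show ?thesis using g by (simp add: fx_def)
      next
        case True
        show ?thesis
        proof (rule dist_induct[OF _ _ True])
          show "g s = fx A s s" using g fx_s[of A s] by simp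
        next
          fix v \<alpha> assume v: "zle s v" "s$\<alpha> < v$\<alpha>" and ih: "g (v - unitv \<alpha>) = fx A s (v - unitv \<alpha>)"
          have z: "zle s (v - unitv \<alpha>)" using zle_minus[OF v] .
          have "g (v - unitv \<alpha> + unitv \<alpha>) = A \<alpha> (v - unitv \<alpha>) ** g (v - unitv \<alpha>)"
            using g z by blast
          also have "\<dots> = fx A s (v - unitv \<alpha> + unitv \<alpha>)"
            using ih fx_rec[OF compat z, of \<alpha>] by simp
          finally show "g v = fx A s v" by simp
        qed
      qed
    qed
  qed
  then show ?thesis unfolding transition_def by simp
qed

lemma fx_inv:
  fixes A :: "'m::finite \<Rightarrow> int^'m \<Rightarrow> complex^'n^'n"
  assumes compat: "\<And>w \<alpha> \<beta>. zle s w \<Longrightarrow> A \<alpha> (w + unitv \<beta>) ** A \<beta> w = A \<beta> (w + unitv \<alpha>) ** A \<alpha> w"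
    and Ainv: "\<And>t \<alpha>. zle s t \<Longrightarrow> invertible (A \<alpha> t)"
  shows "zle s u \<Longrightarrow> invertible (fx A s u)"
proof (rule dist_induct)
  show "invertible (fx A s s)" by (simp add: fx_s invertible_def)
next
  fix v \<alpha> assume v: "zle s v" "s$\<alpha> < v$\<alpha>" and ih: "invertible (fx A s (v - unitv \<alpha>))"
  have z: "zle s (v - unitv \<alpha>)" using zle_minus[OF v] .
  have "invertible (fx A s (v - unitv \<alpha> + unitv \<alpha>))"
    using fx_rec[OF compat z, of \<alpha>] invertible_mult[OF Ainv[OF z] ih] by simp
  then show "invertible (fx A s v)" by simp
qed

lemma mpow_inv: "invertible (B::complex^'b^'b) \<Longrightarrow> invertible (mpow B k)"
proof (induction k)
  case 0 have "invertible (mat 1 :: complex^'b^'b)" unfolding invertible_def by (rule exI[of _ "mat 1"]) simp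
  then show ?case by simp
next
  case (Suc k) then show ?case by (simp add: invertible_mult)
qed

lemma mpow_int_inv: "invertible B \<Longrightarrow> invertible (mpow_int B k)"
  by (simp add: mpow_int_def mpow_inv minv_inv)

lemma mpow_int_Suc:
  assumes "invertible (B::complex^'n^'n)"
  shows "mpow_int B (k + 1) = B ** mpow_int B k"
proof (cases "0 \<le> k")
  case True
  then have "nat (k+1) = Suc (nat k)" by simp
  then show ?thesis using True by (simp add: mpow_int_def)
next
  case False
  then have e: "nat (- k) = Suc (nat (- (k+1)))" by simp
  have "B ** mpow_int B k = (B ** matrix_inv B) ** mpow (matrix_inv B) (nat (- (k+1)))"
    using False by (simp add: mpow_int_def e matrix_mul_assoc)
  also have "\<dots> = mpow_int B (k+1)"
    using minv[OF assms] False by (auto simp: mpow_int_def)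
  finally show ?thesis by simp
qed

theorem theorem2p18:
  fixes t0 :: "int ^ 'm::finite"
    and T :: "nat ^ 'm"
    and A :: "'m \<Rightarrow> int ^ 'm \<Rightarrow> complex ^ 'n::finite ^ 'n"
    and P :: "int ^ 'm \<Rightarrow> complex ^ 'n ^ 'n"
    and B :: "complex ^ 'n ^ 'n"
  assumes T_nz: "T \<noteq> 0"
    and compat: "\<And>t \<alpha> \<beta>. zle t0 t \<Longrightarrow>
        A \<alpha> (t + unitv \<beta>) ** A \<beta> t = A \<beta> (t + unitv \<alpha>) ** A \<alpha> t"
    and A_inv: "\<And>t \<alpha>. zle t0 t \<Longrightarrow> invertible (A \<alpha> t)"
    and P_per: "\<And>t. zle t0 t \<Longrightarrow> P (t + (\<chi> i. int (T $ i))) = P t"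
    and B_inv: "invertible B"
    and floquet: "\<And>t. zle t0 t \<Longrightarrow> transition A t t0 = P t ** mpow_int B (zabs t)"
  shows "(\<forall>t. zle t0 t \<longrightarrow> invertible (P t))
    \<and> (\<forall>y :: int ^ 'm \<Rightarrow> complex ^ 'n.
          (\<forall>t \<alpha>. zle t0 t \<longrightarrow> y (t + unitv \<alpha>) = B *v y t) \<longrightarrow>
          (\<forall>t \<alpha>. zle t0 t \<longrightarrow> P (t + unitv \<alpha>) *v y (t + unitv \<alpha>) = A \<alpha> t *v (P t *v y t)))
    \<and> (\<forall>x :: int ^ 'm \<Rightarrow> complex ^ 'n.
          (\<forall>t \<alpha>. zle t0 t \<longrightarrow> x (t + unitv \<alpha>) = A \<alpha> t *v x t) \<longrightarrow>
          (\<forall>t \<alpha>. zle t0 t \<longrightarrow> matrix_inv (P (t + unitv \<alpha>)) *v x (t + unitv \<alpha>)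
                                 = B *v (matrix_inv (P t) *v x t)))"
proof -
  have Phi: "\<And>t. zle t0 t \<Longrightarrow> fx A t0 t = P t ** mpow_int B (zabs t)"
    using floquet transition_eq[OF compat] by metis
  have Pinv: "\<And>t. zle t0 t \<Longrightarrow> invertible (P t)"
  proof -
    fix t assume t: "zle t0 t"
    have "det (fx A t0 t) \<noteq> 0" using fx_inv[OF compat A_inv t] invertible_det_nz by blast
    then have "det (P t) \<noteq> 0" using Phi[OF t] by (simp add: det_mul)
    then show "invertible (P t)" using invertible_det_nz by blast
  qed
  have key: "\<And>t \<alpha>. zle t0 t \<Longrightarrow> P (t + unitv \<alpha>) ** B = A \<alpha> t ** P t"
  proof -
    fix t \<alpha> assume t: "zle t0 t"
    define M where "M = mpow_int B (zabs t)"
    have Mi: "invertible M" using mpow_int_inv[OF B_inv] M_def by simp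
    have "(P (t + unitv \<alpha>) ** B) ** M = A \<alpha> t ** P t ** M"
      using fx_rec[OF compat t, of \<alpha>] Phi[OF t] Phi[OF zle_plus[OF t], of \<alpha>]
        mpow_int_Suc[OF B_inv, of "zabs t"]
      by (simp add: zabs_add zabs_unitv M_def matrix_mul_assoc)
    then have "(P (t + unitv \<alpha>) ** B) ** M ** matrix_inv M = A \<alpha> t ** P t ** M ** matrix_inv M"
      by simp
    then show "P (t + unitv \<alpha>) ** B = A \<alpha> t ** P t"
      using minv[OF Mi] by (simp add: matrix_mul_assoc[symmetric])
  qed
  show ?thesis
  proof (intro conjI allI impI)
    fix t assume "zle t0 t" then show "invertible (P t)" by (rule Pinv)
  next
    fix y :: "int ^ 'm \<Rightarrow> complex ^ 'n" and t \<alpha>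
    assume y: "\<forall>t \<alpha>. zle t0 t \<longrightarrow> y (t + unitv \<alpha>) = B *v y t" and t: "zle t0 t"
    show "P (t + unitv \<alpha>) *v y (t + unitv \<alpha>) = A \<alpha> t *v (P t *v y t)"
      using y t key[OF t, of \<alpha>] by (simp add: matrix_vector_mul_assoc)
  next
    fix x :: "int ^ 'm \<Rightarrow> complex ^ 'n" and t \<alpha>
    assume x: "\<forall>t \<alpha>. zle t0 t \<longrightarrow> x (t + unitv \<alpha>) = A \<alpha> t *v x t" and t: "zle t0 t"
    have i1: "invertible (P (t + unitv \<alpha>))" using Pinv zle_plus[OF t] by blast
    have i2: "invertible (P t)" using Pinv t by blast
    have "matrix_inv (P (t + unitv \<alpha>)) ** A \<alpha> t
        = matrix_inv (P (t + unitv \<alpha>)) ** (P (t + unitv \<alpha>) ** B) ** matrix_inv (P t)"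
      using key[OF t, of \<alpha>] minv[OF i2] by (simp add: matrix_mul_assoc[symmetric])
    also have "\<dots> = B ** matrix_inv (P t)"
      using minv[OF i1] by (simp add: matrix_mul_assoc)
    finally have e: "matrix_inv (P (t + unitv \<alpha>)) ** A \<alpha> t = B ** matrix_inv (P t)" .
    show "matrix_inv (P (t + unitv \<alpha>)) *v x (t + unitv \<alpha>) = B *v (matrix_inv (P t) *v x t)"
      using x t e by (simp add: matrix_vector_mul_assoc)
  qed
qed

end
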